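(* Let $\mathbf k=(k_1,\ldots,k_r)\in\mathbb N^r$, $\mathbf x=(x_1,\ldots,x_r)$ with $|x_j|\le1$, $l\in\mathbb N_0$ and $n\in\mathbb N$. Then \[ \sum_{n\ge n_1>\cdots>n_r>0}\prod_{j=1}^r\frac{x_j^{n_j+l}}{(n_j+l)^{k_j}}=(-1)^r\sum_{j=0}^r(-1)^j\,\zeta_{n+l}(k_1,\ldots,k_j;x_1,\ldots,x_j)\,\zeta^\star_l(k_r,k_{r-1},\ldots,k_{j+1};x_r,x_{r-1},\ldots,x_{j+1}). \]
   Context: $\zeta_n(\mathbf k;\mathbf x)=\sum_{n\ge n_1>\cdots>n_r\ge1}\prod_i x_i^{n_i}/n_i^{k_i}$ and $\zeta^\star_n(\mathbf k;\mathbf x)=\sum_{n\ge n_1\ge\cdots\ge n_r\ge1}\prod_i x_i^{n_i}/n_i^{k_i}$ for $n\in\mathbb N_0$; both equal $1$ for the empty index, and a sum over an empty range is $0$ (so e.g. $\zeta^\star_0$ of a nonempty index is $0$). *)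

theory Defs
  imports Complex_Main
begin

definition strict_tuples :: "nat \<Rightarrow> nat \<Rightarrow> nat list set" where
  "strict_tuples n r = {ns. length ns = r \<and> sorted_wrt (>) ns \<and> (\<forall>m\<in>set ns. 1 \<le> m \<and> m \<le> n)}"

definition weak_tuples :: "nat \<Rightarrow> nat \<Rightarrow> nat list set" where
  "weak_tuples n r = {ns. length ns = r \<and> sorted_wrt (\<ge>) ns \<and> (\<forall>m\<in>set ns. 1 \<le> m \<and> m \<le> n)}"

text \<open>Truncated multiple polylogarithm zeta_n(k;x) and its star version.
  ks and xs are assumed to have the same length.\<close>

definition mzeta :: "nat \<Rightarrow> nat list \<Rightarrow> complex list \<Rightarrow> complex" where
  "mzeta n ks xs = (\<Sum>ns\<in>strict_tuples n (length ks).
      \<Prod>i<length ks. xs ! i ^ (ns ! i) / of_nat (ns ! i) ^ (ks ! i))"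

definition mzeta_star :: "nat \<Rightarrow> nat list \<Rightarrow> complex list \<Rightarrow> complex" where
  "mzeta_star n ks xs = (\<Sum>ns\<in>weak_tuples n (length ks).
      \<Prod>i<length ks. xs ! i ^ (ns ! i) / of_nat (ns ! i) ^ (ks ! i))"

end

theory Submission imports Defs begin

definition P :: "(nat \<Rightarrow> complex) list \<Rightarrow> nat list \<Rightarrow> complex" where
  "P fs ns = (\<Prod>i<length fs. (fs!i) (ns!i))"

lemma P_Cons: "P (f#fs) (m#t) = f m * P fs t"
  unfolding P_def length_Cons prod.lessThan_Suc_shift by simp

fun A :: "nat \<Rightarrow> (nat \<Rightarrow> complex) list \<Rightarrow> complex" where
  "A N [] = 1"
| "A N (f#fs) = (\<Sum>m=1..N. f m * A (m-1) fs)"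

fun V :: "nat \<Rightarrow> nat \<Rightarrow> (nat \<Rightarrow> complex) list \<Rightarrow> complex" where
  "V lo l [] = 1"
| "V lo l (g#gs) = (\<Sum>p=lo..l. g p * V p l gs)"

definition asc :: "nat \<Rightarrow> nat \<Rightarrow> nat \<Rightarrow> nat list set" where
  "asc lo l r = {ns. length ns = r \<and> sorted ns \<and> (\<forall>m\<in>set ns. lo \<le> m \<and> m \<le> l)}"

lemma finite_strict: "finite (strict_tuples N r)"
proof -
  have "strict_tuples N r \<subseteq> {ns. set ns \<subseteq> {..N} \<and> length ns = r}"
    unfolding strict_tuples_def by auto
  thus ?thesis by (rule finite_subset) (simp add: finite_lists_length_eq)
qed

lemma finite_asc: "finite (asc lo l r)"
proof -
  have "asc lo l r \<subseteq> {ns. set ns \<subseteq> {..l} \<and> length ns = r}"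
    unfolding asc_def by auto
  thus ?thesis by (rule finite_subset) (simp add: finite_lists_length_eq)
qed

lemma strict_Suc: "strict_tuples N (Suc r) = (\<lambda>(m,t). m#t) ` (SIGMA m:{1..N}. strict_tuples (m-1) r)"
proof (rule set_eqI)
  fix ns show "ns \<in> strict_tuples N (Suc r) \<longleftrightarrow> ns \<in> (\<lambda>(m,t). m#t) ` (SIGMA m:{1..N}. strict_tuples (m-1) r)"
  proof (cases ns)
    case Nil then show ?thesis by (auto simp: strict_tuples_def)
  next
    case (Cons m t)
    show ?thesis unfolding Cons strict_tuples_def by (auto simp: image_iff) 
  qed
qed

lemma asc_Suc: "asc lo l (Suc r) = (\<lambda>(m,t). m#t) ` (SIGMA m:{lo..l}. asc m l r)"
proof (rule set_eqI)
  fix ns show "ns \<in> asc lo l (Suc r) \<longleftrightarrow> ns \<in> (\<lambda>(m,t). m#t) ` (SIGMA m:{lo..l}. asc m l r)"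
  proof (cases ns)
    case Nil then show ?thesis by (auto simp: asc_def)
  next
    case (Cons m t)
    show ?thesis unfolding Cons asc_def by (auto simp: image_iff) 
  qed
qed

lemma A_eq: "A N fs = (\<Sum>ns\<in>strict_tuples N (length fs). P fs ns)"
proof (induction fs arbitrary: N)
  case Nil
  have "strict_tuples N 0 = {[]}" by (auto simp: strict_tuples_def)
  then show ?case by (simp add: P_def)
next
  case (Cons f fs)
  have inj: "inj_on (\<lambda>(m,t). m#t) (SIGMA m:{1..N}. strict_tuples (m-1) (length fs))"
    by (auto simp: inj_on_def)
  have "(\<Sum>ns\<in>strict_tuples N (length (f#fs)). P (f#fs) ns)
     = (\<Sum>(m,t)\<in>(SIGMA m:{1..N}. strict_tuples (m-1) (length fs)). P (f#fs) (m#t))"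
    unfolding length_Cons strict_Suc sum.reindex[OF inj] by (simp add: comp_def case_prod_unfold)
  also have "\<dots> = (\<Sum>m=1..N. \<Sum>t\<in>strict_tuples (m-1) (length fs). f m * P fs t)"
    by (subst sum.Sigma[symmetric]) (auto simp: finite_strict P_Cons)
  also have "\<dots> = A N (f#fs)" by (simp add: Cons sum_distrib_left)
  finally show ?case ..
qed

lemma V_eq: "V lo l fs = (\<Sum>ns\<in>asc lo l (length fs). P fs ns)"
proof (induction fs arbitrary: lo)
  case Nil
  have "asc lo l 0 = {[]}" by (auto simp: asc_def)
  then show ?case by (simp add: P_def)
next
  case (Cons f fs)
  have inj: "inj_on (\<lambda>(m,t). m#t) (SIGMA m:{lo..l}. asc m l (length fs))"
    by (auto simp: inj_on_def)
  have "(\<Sum>ns\<in>asc lo l (length (f#fs)). P (f#fs) ns)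
     = (\<Sum>(m,t)\<in>(SIGMA m:{lo..l}. asc m l (length fs)). P (f#fs) (m#t))"
    unfolding length_Cons asc_Suc sum.reindex[OF inj] by (simp add: comp_def case_prod_unfold)
  also have "\<dots> = (\<Sum>m=lo..l. \<Sum>t\<in>asc m l (length fs). f m * P fs t)"
    by (subst sum.Sigma[symmetric]) (auto simp: finite_asc P_Cons)
  also have "\<dots> = V lo l (f#fs)" by (simp add: Cons sum_distrib_left)
  finally show ?case ..
qed


lemma split_ivl:
  fixes h :: "nat \<Rightarrow> complex"
  assumes "M \<le> l"
  shows "(\<Sum>p=1..l. h p) = (\<Sum>p=1..M. h p) + (\<Sum>p=Suc M..l. h p)"
proof -
  have e: "{1..l} = {1..M} \<union> {Suc M..l}" using assms by auto
  show ?thesis unfolding e by (rule sum.union_disjoint) auto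
qed

lemma T_lemma:
  "(\<Sum>j=0..r. (-1)^(Suc j) * A M (g # take j gs) * W j)
   = - (\<Sum>p=1..M. g p * (\<Sum>j=0..r. (-1)^j * A (p-1) (take j gs) * W j))"
proof -
  have "(\<Sum>j=0..r. (-1)^(Suc j) * A M (g # take j gs) * W j)
      = - (\<Sum>j=0..r. \<Sum>p=1..M. g p * ((-1)^j * A (p-1) (take j gs) * W j))"
    by (simp add: sum_distrib_left sum_distrib_right sum_negf algebra_simps)
  also have "\<dots> = - (\<Sum>p=1..M. g p * (\<Sum>j=0..r. (-1)^j * A (p-1) (take j gs) * W j))"
    by (subst sum.swap) (simp add: sum_distrib_left)
  finally show ?thesis .
qed

lemma dual:
  assumes "M \<le> l"
  shows "V (Suc M) l gs = (\<Sum>j=0..length gs. (-1)^j * A M (take j gs) * V 1 l (drop j gs))"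
  using assms
proof (induction gs arbitrary: M)
  case Nil
  then show ?case by simp
next
  case (Cons g gs)
  define r where "r = length gs"
  define R where "R M' = (\<Sum>j=0..r. (-1)^j * A M' (take j gs) * V 1 l (drop j gs))" for M'
  have IH: "\<And>M'. M' \<le> l \<Longrightarrow> V (Suc M') l gs = R M'" using Cons.IH by (simp add: R_def r_def)
  have pR: "V p l gs = R (p-1)" if "1 \<le> p" "p \<le> l" for p
    using IH[of "p-1"] that by simp
  have L: "V (Suc M) l (g#gs) = (\<Sum>p=Suc M..l. g p * R (p-1))"
    unfolding V.simps by (rule sum.cong) (auto simp: pR)
  have V1: "V 1 l (g#gs) = (\<Sum>p=1..l. g p * R (p-1))"
    unfolding V.simps by (rule sum.cong) (auto simp: pR)
  have T: "(\<Sum>j=0..r. (-1)^(Suc j) * A M (g # take j gs) * V 1 l (drop j gs)) = - (\<Sum>p=1..M. g p * R (p-1))"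
    unfolding R_def by (rule T_lemma)
  have RHS: "(\<Sum>j=0..length (g#gs). (-1)^j * A M (take j (g#gs)) * V 1 l (drop j (g#gs)))
     = V 1 l (g#gs) + (\<Sum>j=0..r. (-1)^(Suc j) * A M (g # take j gs) * V 1 l (drop j gs))"
    by (simp add: r_def sum.atLeast0_atMost_Suc_shift del: sum.cl_ivl_Suc)
  show ?case
    using L V1 T RHS split_ivl[OF Cons.prems, of "\<lambda>p. g p * R (p-1)"] by simp
qed

lemma main_lemma:
  "A N (map (\<lambda>f m. f (m+l)) fs)
   = (-1)^length fs * (\<Sum>j=0..length fs. (-1)^j * A (N+l) (take j fs) * V 1 l (drop j fs))"
proof (induction fs arbitrary: N)
  case Nil
  then show ?case by simp
next
  case (Cons f fs)
  define r where "r = length fs"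
  define Q where "Q M' = (\<Sum>j=0..r. (-1)^j * A M' (take j fs) * V 1 l (drop j fs))" for M'
  have IH: "\<And>N'. A N' (map (\<lambda>f m. f (m+l)) fs) = (-1)^r * Q (N'+l)"
    using Cons.IH by (simp add: Q_def r_def)
  define h where "h p = f p * ((-1)^r * Q (p-1))" for p
  have "A N (map (\<lambda>f m. f (m+l)) (f#fs)) = (\<Sum>m=1..N. h (m+l))"
    unfolding list.map A.simps by (rule sum.cong) (auto simp: IH h_def)
  also have "\<dots> = (\<Sum>p=1+l..N+l. h p)"
    by (rule sum.shift_bounds_cl_nat_ivl[symmetric])
  finally have L: "A N (map (\<lambda>f m. f (m+l)) (f#fs)) = (\<Sum>p=Suc l..N+l. h p)" by simp
  have sp: "(\<Sum>p=1..N+l. h p) = (\<Sum>p=1..l. h p) + (\<Sum>p=Suc l..N+l. h p)"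
    by (rule split_ivl) simp
  have pQ: "V p l fs = Q (p-1)" if "1 \<le> p" "p \<le> l" for p
    using dual[of "p-1" l fs] that by (simp add: Q_def r_def)
  have V1: "V 1 l (f#fs) = (\<Sum>p=1..l. f p * Q (p-1))"
    unfolding V.simps by (rule sum.cong) (auto simp: pQ)
  have T: "(\<Sum>j=0..r. (-1)^(Suc j) * A (N+l) (f # take j fs) * V 1 l (drop j fs)) = - (\<Sum>p=1..N+l. f p * Q (p-1))"
    unfolding Q_def by (rule T_lemma)
  have RHS: "(\<Sum>j=0..length (f#fs). (-1)^j * A (N+l) (take j (f#fs)) * V 1 l (drop j (f#fs)))
     = V 1 l (f#fs) + (\<Sum>j=0..r. (-1)^(Suc j) * A (N+l) (f # take j fs) * V 1 l (drop j fs))"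
    by (simp add: r_def sum.atLeast0_atMost_Suc_shift del: sum.cl_ivl_Suc)
  have hs: "(\<Sum>p\<in>S. h p) = (-1)^r * (\<Sum>p\<in>S. f p * Q (p-1))" for S
    by (simp add: h_def sum_distrib_left algebra_simps)
  show ?case
    unfolding L RHS V1 T using sp by (simp add: hs r_def algebra_simps)
qed


definition fl :: "nat list \<Rightarrow> complex list \<Rightarrow> (nat \<Rightarrow> complex) list" where
  "fl ks xs = map (\<lambda>(k,x) m. x^m / of_nat m ^ k) (zip ks xs)"

lemma mzeta_fl:
  assumes "length xs = length ks"
  shows "mzeta N ks xs = A N (fl ks xs)"
  unfolding mzeta_def A_eq P_def using assms
  by (auto simp: fl_def intro!: sum.cong prod.cong)

lemma prod_rev: "(\<Prod>i<r. g (r - Suc i)) = (\<Prod>i<(r::nat). (g i :: complex))"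
  by (rule prod.reindex_bij_witness[of _ "\<lambda>i. r - Suc i" "\<lambda>i. r - Suc i"]) auto

lemma weak_rev: "weak_tuples l r = rev ` asc 1 l r"
proof (rule set_eqI)
  fix ns
  have 1: "ns \<in> rev ` asc 1 l r \<longleftrightarrow> rev ns \<in> asc 1 l r"
    by (metis image_iff rev_rev_ident)
  have 2: "ns \<in> weak_tuples l r \<longleftrightarrow> rev ns \<in> asc 1 l r"
    by (simp add: weak_tuples_def asc_def sorted_wrt_rev)
  show "ns \<in> weak_tuples l r \<longleftrightarrow> ns \<in> rev ` asc 1 l r" using 1 2 by simp
qed

lemma mzeta_star_fl:
  assumes "length xs = length ks"
  shows "mzeta_star l (rev ks) (rev xs) = V 1 l (fl ks xs)"
proof -
  have "mzeta_star l (rev ks) (rev xs) = (\<Sum>ms\<in>asc 1 l (length ks).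
      \<Prod>i<length ks. rev xs ! i ^ (rev ms ! i) / of_nat (rev ms ! i) ^ (rev ks ! i))"
    unfolding mzeta_star_def weak_rev length_rev
    by (subst sum.reindex) (auto intro: inj_onI)
  also have "\<dots> = (\<Sum>ms\<in>asc 1 l (length ks).
      \<Prod>i<length ks. xs ! i ^ (ms ! i) / of_nat (ms ! i) ^ (ks ! i))"
  proof (rule sum.cong[OF refl])
    fix ms assume "ms \<in> asc 1 l (length ks)"
    hence lm: "length ms = length ks" by (simp add: asc_def)
    have "(\<Prod>i<length ks. rev xs ! i ^ (rev ms ! i) / of_nat (rev ms ! i) ^ (rev ks ! i))
       = (\<Prod>i<length ks. (\<lambda>i. xs ! i ^ (ms ! i) / of_nat (ms ! i) ^ (ks ! i)) (length ks - Suc i))"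
      using lm assms by (intro prod.cong refl) (simp add: rev_nth)
    also have "\<dots> = (\<Prod>i<length ks. xs ! i ^ (ms ! i) / of_nat (ms ! i) ^ (ks ! i))"
      by (rule prod_rev)
    finally show "(\<Prod>i<length ks. rev xs ! i ^ (rev ms ! i) / of_nat (rev ms ! i) ^ (rev ks ! i))
       = (\<Prod>i<length ks. xs ! i ^ (ms ! i) / of_nat (ms ! i) ^ (ks ! i))" .
  qed
  also have "\<dots> = V 1 l (fl ks xs)"
    unfolding V_eq P_def using assms
    by (auto simp: fl_def intro!: sum.cong prod.cong)
  finally show ?thesis .
qed

theorem mainTheorem12:
  fixes ks :: "nat list" and xs :: "complex list" and l n :: nat
  assumes "length xs = length ks"
    and "\<forall>k\<in>set ks. k \<ge> 1"
    and "\<forall>x\<in>set xs. norm x \<le> 1"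
    and "n \<ge> 1"
  shows "(\<Sum>ns\<in>strict_tuples n (length ks).
            \<Prod>j<length ks. xs ! j ^ (ns ! j + l) / of_nat (ns ! j + l) ^ (ks ! j))
       = (-1) ^ length ks * (\<Sum>j=0..length ks. (-1) ^ j *
            mzeta (n + l) (take j ks) (take j xs) *
            mzeta_star l (rev (drop j ks)) (rev (drop j xs)))"
proof -
  define F where "F = fl ks xs"
  have lF: "length F = length ks" using assms(1) by (simp add: F_def fl_def)
  have "(\<Sum>ns\<in>strict_tuples n (length ks).
            \<Prod>j<length ks. xs ! j ^ (ns ! j + l) / of_nat (ns ! j + l) ^ (ks ! j))
      = A n (map (\<lambda>f m. f (m+l)) F)"
    unfolding A_eq P_def using assms(1)
    by (auto simp: F_def fl_def intro!: sum.cong prod.cong)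
  also have "\<dots> = (-1)^length F * (\<Sum>j=0..length F. (-1)^j * A (n+l) (take j F) * V 1 l (drop j F))"
    by (rule main_lemma)
  also have "\<dots> = (-1) ^ length ks * (\<Sum>j=0..length ks. (-1) ^ j *
            mzeta (n + l) (take j ks) (take j xs) *
            mzeta_star l (rev (drop j ks)) (rev (drop j xs)))"
    unfolding lF using assms(1)
    by (auto simp: F_def mzeta_fl mzeta_star_fl fl_def take_map drop_map take_zip drop_zip
        intro!: sum.cong)
  finally show ?thesis .
qed

end
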